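(* Let $\sigma>0$, $\eta>0$, $\hat\alpha>0$, $h>0$, $r\ge0$, $a\in\mathbb{R}$, and let $\chi$ be a one-dimensional Brownian motion with drift $a$, variance $\sigma^2$ and $\chi(0)\ge0$. Let $(\beta^*,v)$ be a pair with $\beta^*>0$, $v\in C^1[0,\infty)$, $\beta^*=-\frac{\hat\alpha}4v(y)^2+\frac12\sigma^2v'(y)-\eta yv(y)+av(y)+hy$ for all $y\ge0$, $v(0)=-r$, $v$ nondecreasing with $\lim_{y\to\infty}v(y)=h/\eta$, and let $\theta^*(w)=\frac{\hat\alpha}2v(w)$. Let $W^*$ be the workload process under $\theta^*$, i.e. $W^*(t)=\chi(t)-\eta\int_0^tW^*(s)ds-\int_0^t\theta^*(W^*(s))ds+L(t)$ with $W^*\ge0$, $L$ nondecreasing, $L(0)=0$ and $L$ increasing only when $W^*=0$. Then $\theta^*$ is admissible, i.e. $\lim_{t\to\infty}E[W^*(t)]/t=0$.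
   Context: Admissibility of a stationary Markov policy $\theta$ in this workload control problem means that the associated work-conserving reflected workload process $W$ (with $L$ increasing only when $W=0$) satisfies $\lim_{t\to\infty}E[W(t)]/t=0$. *)

theory Defs
  imports "HOL-Probability.Probability"
begin

definition brownian_motion_drift ::
  "'w measure \<Rightarrow> (real \<Rightarrow> 'w \<Rightarrow> real) \<Rightarrow> real \<Rightarrow> real \<Rightarrow> real \<Rightarrow> bool" where
  "brownian_motion_drift M X x a \<sigma> \<longleftrightarrow>
     prob_space M \<and>
     (\<forall>t\<ge>0. X t \<in> borel_measurable M) \<and>
     (\<forall>\<omega>\<in>space M. X 0 \<omega> = x) \<and>
     (\<forall>\<omega>\<in>space M. continuous_on {0..} (\<lambda>t. X t \<omega>)) \<and>
     (\<forall>s t. 0 \<le> s \<and> s < t \<longrightarrow>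
        distributed M lborel (\<lambda>\<omega>. X t \<omega> - X s \<omega>)
          (\<lambda>y. ennreal (normal_density (a * (t - s)) (\<sigma> * sqrt (t - s)) y))) \<and>
     (\<forall>(tt :: nat \<Rightarrow> real) n. 0 \<le> tt 0 \<and> strict_mono tt \<longrightarrow>
        prob_space.indep_vars M (\<lambda>_. borel) (\<lambda>i \<omega>. X (tt (Suc i)) \<omega> - X (tt i) \<omega>) {..<n})"

definition workload_process ::
  "'w measure \<Rightarrow> (real \<Rightarrow> 'w \<Rightarrow> real) \<Rightarrow> real \<Rightarrow> (real \<Rightarrow> real)
    \<Rightarrow> (real \<Rightarrow> 'w \<Rightarrow> real) \<Rightarrow> (real \<Rightarrow> 'w \<Rightarrow> real) \<Rightarrow> bool" where
  "workload_process M chi \<eta> \<theta> W L \<longleftrightarrow>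
     (\<forall>t\<ge>0. W t \<in> borel_measurable M) \<and>
     (\<forall>\<omega>\<in>space M.
        continuous_on {0..} (\<lambda>t. W t \<omega>) \<and>
        continuous_on {0..} (\<lambda>t. L t \<omega>) \<and>
        (\<forall>t\<ge>0. W t \<omega> = chi t \<omega> - \<eta> * integral {0..t} (\<lambda>s. W s \<omega>)
                      - integral {0..t} (\<lambda>s. \<theta> (W s \<omega>)) + L t \<omega>) \<and>
        (\<forall>t\<ge>0. W t \<omega> \<ge> 0) \<and>
        L 0 \<omega> = 0 \<and>
        mono_on {0..} (\<lambda>t. L t \<omega>) \<and>
        (\<forall>s t. 0 \<le> s \<and> s < t \<and> (\<forall>u\<in>{s..t}. W u \<omega> > 0) \<longrightarrow> L t \<omega> = L s \<omega>))"

definition admissible_workload :: "'w measure \<Rightarrow> (real \<Rightarrow> 'w \<Rightarrow> real) \<Rightarrow> bool" where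
  "admissible_workload M W \<longleftrightarrow>
     (\<forall>t\<ge>0. integrable M (W t)) \<and>
     ((\<lambda>t. (\<integral>\<omega>. W t \<omega> \<partial>M) / t) \<longlongrightarrow> 0) at_top"

end

theory Submission
  imports Defs "HOL-Real_Asymp.Real_Asymp"
begin

lemma quart_bound:
  fixes f :: "nat \<Rightarrow> real"
  assumes lam: "lam > 0" and A: "finite A" "j \<in> A"
  shows "\<bar>f j\<bar> \<le> lam + (\<Sum>i\<in>A. f i ^ 4) / lam ^ 3"
proof -
  have s: "f j ^ 4 \<le> (\<Sum>i\<in>A. f i ^ 4)"
    by (rule member_le_sum[OF A(2)]) (auto simp: A(1))
  have s0: "0 \<le> (\<Sum>i\<in>A. f i ^ 4) / lam ^ 3" using lam by (auto intro!: sum_nonneg divide_nonneg_pos)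
  show ?thesis
  proof (cases "\<bar>f j\<bar> \<le> lam")
    case True then show ?thesis using s0 by linarith
  next
    case False
    then have "lam ^ 3 \<le> \<bar>f j\<bar> ^ 3" using lam by (intro power_mono) auto
    then have "\<bar>f j\<bar> * lam ^ 3 \<le> \<bar>f j\<bar> * \<bar>f j\<bar> ^ 3" by (intro mult_left_mono) auto
    also have "\<dots> = f j ^ 4" by (simp add: power_abs[symmetric] eval_nat_numeral)
    also have "\<dots> \<le> (\<Sum>i\<in>A. f i ^ 4)" by (rule s)
    finally have "\<bar>f j\<bar> \<le> (\<Sum>i\<in>A. f i ^ 4) / lam ^ 3" using lam by (simp add: field_simps)
    then show ?thesis using lam by linarith
  qed
qed

lemma sum_identity:
  fixes \<sigma> t :: real and m :: nat
  assumes "\<sigma> > 0" "t > 0"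
  shows "2^m * (3 * (\<sigma> * sqrt (t / 2^m))^4) / (\<sigma> * sqrt t * (4/5)^m)^3
         = 3 * \<sigma> * sqrt t * (125/128)^m"
proof -
  define q where "q = sqrt t"
  define z :: real where "z = 2^m"
  define y :: real where "y = (4/5)^m"
  have q: "q > 0" "t = q^2" using assms by (auto simp: q_def)
  have z: "z > 0" "(4::real)^m = z^2" by (auto simp: z_def power2_eq_square power_mult_distrib[symmetric])
  have y: "y > 0" by (simp add: y_def)
  have sq4: "sqrt u ^ 4 = u^2" if "u \<ge> 0" for u :: real
  proof -
    have "(sqrt u ^ 2) ^ 2 = sqrt u ^ (2 * 2)" by (rule power_mult[symmetric])
    then show ?thesis using that by simp
  qed
  have "(sqrt (t / z))^4 = (t / z)^2"
    using assms z by (intro sq4) simp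
  then have e1: "(\<sigma> * sqrt (t / z))^4 = \<sigma>^4 * q^4 / z^2"
    using q by (simp add: power_mult_distrib power_divide power_mult[symmetric])
  have "y^3 = ((4/5)^3)^m" unfolding y_def
    by (metis power_mult mult.commute)
  then have "z * y^3 = 2^m * ((4/5)^3)^m" by (simp add: z_def)
  also have "\<dots> = (2 * (4/5)^3)^m" by (rule power_mult_distrib[symmetric])
  also have "\<dots> = (128/125)^m" by (simp add: eval_nat_numeral)
  finally have e2: "(125/128::real)^m = 1 / (z * y^3)" by (simp add: power_one_over[symmetric])
  have "2^m * (3 * (\<sigma> * sqrt (t / 2^m))^4) / (\<sigma> * sqrt t * (4/5)^m)^3
     = z * (3 * (\<sigma>^4 * q^4 / z^2)) / (\<sigma> * q * y)^3"
    by (simp only: z_def[symmetric] y_def[symmetric] q_def[symmetric] e1)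
  also have "\<dots> = 3 * \<sigma> * q * (1 / (z * y^3))" using q z y assms
    by (simp add: field_simps power2_eq_square eval_nat_numeral)
  finally show ?thesis by (simp only: e2 q_def)
qed



lemma normal4:
  fixes X :: "'w \<Rightarrow> real"
  assumes d: "distributed M lborel X (\<lambda>y. ennreal (normal_density \<mu> s y))" and s: "s > 0"
  shows "integrable M (\<lambda>\<omega>. (X \<omega> - \<mu>)^4)"
    and "(\<integral>\<omega>. (X \<omega> - \<mu>)^4 \<partial>M) = 3 * s^4"
proof -
  have h: "has_bochner_integral lborel (\<lambda>x. normal_density \<mu> s x * (x - \<mu>) ^ (2 * 2)) (fact (2 * 2) / ((2 / s\<^sup>2)^2 * fact 2))"
    by (rule normal_moment_even[OF s])
  have v: "fact (2 * 2) / ((2 / s\<^sup>2)^2 * fact 2) = 3 * s^4"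
    using s by (simp add: fact_numeral field_simps power2_eq_square eval_nat_numeral)
  have i: "integrable lborel (\<lambda>x. normal_density \<mu> s x * (x - \<mu>) ^ 4)"
    using h by (simp add: has_bochner_integral_iff)
  show "integrable M (\<lambda>\<omega>. (X \<omega> - \<mu>)^4)"
    using distributed_integrable[OF d, of "\<lambda>x. (x - \<mu>)^4"] i by simp
  have "(\<integral>\<omega>. (X \<omega> - \<mu>)^4 \<partial>M) = (\<integral>x. normal_density \<mu> s x * (x - \<mu>) ^ 4 \<partial>lborel)"
    using distributed_integral[OF d, of "\<lambda>x. (x - \<mu>)^4"] by simp
  also have "\<dots> = 3 * s^4" using has_bochner_integral_integral_eq[OF h] v by simp
  finally show "(\<integral>\<omega>. (X \<omega> - \<mu>)^4 \<partial>M) = 3 * s^4" .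
qed



lemma chain:
  fixes B :: "real \<Rightarrow> real" and P :: "nat \<Rightarrow> real"
  assumes B0: "B 0 = 0"
    and inc: "\<And>m j. j < 2^m \<Longrightarrow> \<bar>B (t * real (Suc j) / 2^m) - B (t * real j / 2^m)\<bar> \<le> P m"
  shows "k \<le> 2^n \<Longrightarrow> \<bar>B (t * real k / 2^n)\<bar> \<le> (\<Sum>m\<le>n. P m)"
proof (induction n arbitrary: k)
  case 0
  have "P 0 \<ge> 0" using inc[of 0 0] by auto
  then show ?case using 0 inc[of 0 0] B0 by (cases k) auto
next
  case (Suc n)
  have Pn: "P (Suc n) \<ge> 0" using inc[of 0 "Suc n"] abs_ge_zero order_trans by (metis inc pos2 zero_less_power)
  show ?case
  proof (cases "even k")
    case True
    then obtain k' where k': "k = 2 * k'" by blast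
    have "k' \<le> 2^n" using Suc.prems k' by simp
    then have "\<bar>B (t * real k' / 2^n)\<bar> \<le> (\<Sum>m\<le>n. P m)" by (rule Suc.IH)
    moreover have "t * real k / 2^Suc n = t * real k' / 2^n" using k' by simp
    ultimately show ?thesis using Pn by simp
  next
    case False
    then obtain k' where k': "k = Suc (2 * k')" by (metis oddE Suc_eq_plus1)
    have "k' < 2^n" using Suc.prems k' by simp
    then have ih: "\<bar>B (t * real k' / 2^n)\<bar> \<le> (\<Sum>m\<le>n. P m)" using Suc.IH by simp
    have "2 * k' < 2 ^ Suc n" using \<open>k' < 2^n\<close> by simp
    from inc[OF this] have i: "\<bar>B (t * real k / 2 ^ Suc n) - B (t * real (2*k') / 2 ^ Suc n)\<bar> \<le> P (Suc n)"
      using k' by simp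
    have "t * real (2*k') / 2^Suc n = t * real k' / 2^n" by simp
    then show ?thesis using ih i by simp
  qed
qed

lemma dense_bound:
  fixes B :: "real \<Rightarrow> real"
  assumes t: "t > 0" and c: "continuous_on {0..t} B"
    and bd: "\<And>n k. k \<le> 2^n \<Longrightarrow> \<bar>B (t * real k / 2^n)\<bar> \<le> g"
    and r: "r \<in> {0..t}"
  shows "\<bar>B r\<bar> \<le> g"
proof -
  define k where "k n = nat \<lfloor>r * 2^n / t\<rfloor>" for n :: nat
  define d where "d n = t * real (k n) / 2^n" for n :: nat
  have fl: "real (k n) = of_int \<lfloor>r * 2^n / t\<rfloor>" for n
    unfolding k_def using r t by (simp add: divide_nonneg_pos)
  have dle: "d n \<le> r" for n
  proof -
    have "real (k n) \<le> r * 2^n / t" using fl by simp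
    then show ?thesis unfolding d_def using t by (simp add: field_simps)
  qed
  have dge: "r - t / 2^n \<le> d n" for n
  proof -
    have "r * 2^n / t - 1 \<le> real (k n)" using fl[of n] real_of_int_floor_gt_diff_one[of "r * 2^n / t"] by linarith
    then have "t * (r * 2^n / t - 1) \<le> t * real (k n)" using t by (intro mult_left_mono) auto
    moreover have "t * (r * 2^n / t - 1) = r * 2^n - t" using t by (simp add: field_simps)
    ultimately have "r * 2^n - t \<le> t * real (k n)" by linarith
    then have "(r*2^n - t)/2^n \<le> t*real (k n)/2^n" by (simp add: divide_right_mono)
    moreover have "(r*2^n - t)/2^n = r - t/2^n" by (simp add: field_simps)
    ultimately show ?thesis unfolding d_def by simp
  qed
  have d0: "d n \<ge> 0" for n unfolding d_def using t by simp
  have kle: "k n \<le> 2^n" for n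
  proof -
    have "t * real (k n) \<le> r * 2^n" using dle[of n] t unfolding d_def by (simp add: field_simps)
    also have "\<dots> \<le> t * 2^n" using r by (intro mult_right_mono) auto
    finally have "real (k n) \<le> 2^n" using t by simp
    then show ?thesis by (metis of_nat_le_iff of_nat_numeral of_nat_power)
  qed
  have "(\<lambda>n. t / 2^n) \<longlonglongrightarrow> 0"
    by (intro LIMSEQ_divide_realpow_zero) auto
  from tendsto_diff[OF tendsto_const this] have "(\<lambda>n. r - t / 2^n) \<longlonglongrightarrow> r - 0" .
  then have rl: "(\<lambda>n. r - t / 2^n) \<longlonglongrightarrow> r" by simp
  have dl: "d \<longlonglongrightarrow> r"
    by (intro tendsto_sandwich[OF _ _ rl tendsto_const] always_eventually allI dle dge)
  have "(\<lambda>n. B (d n)) \<longlonglongrightarrow> B r"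
  proof -
    have "d n \<le> t" for n using dle[of n] r by simp
    then show ?thesis
      using continuous_on_tendsto_compose[OF c dl] r d0 by (auto intro!: always_eventually)
  qed
  then have "(\<lambda>n. \<bar>B (d n)\<bar>) \<longlonglongrightarrow> \<bar>B r\<bar>" by (rule tendsto_rabs)
  moreover have "\<bar>B (d n)\<bar> \<le> g" for n unfolding d_def by (rule bd[OF kle])
  ultimately show ?thesis by (intro LIMSEQ_le_const2) auto
qed


lemma expect_bound:
  fixes M :: "'w measure" and chi :: "real \<Rightarrow> 'w \<Rightarrow> real" and Z :: "'w \<Rightarrow> real"
  assumes BM: "brownian_motion_drift M chi x a \<sigma>" and sig: "\<sigma> > 0" and t: "t > 0"
    and Zm: "Z \<in> borel_measurable M" and Znn: "\<And>\<omega>. \<omega> \<in> space M \<Longrightarrow> Z \<omega> \<ge> 0"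
    and Zb: "\<And>\<omega>. \<omega> \<in> space M \<Longrightarrow> \<exists>s\<in>{0..t}. Z \<omega> \<le> K + (chi t \<omega> - a * t) - (chi s \<omega> - a * s)"
    and K: "K \<ge> 0"
  shows "integrable M Z" "(\<integral>\<omega>. Z \<omega> \<partial>M) \<le> K + 266 * \<sigma> * sqrt t"
proof -
  have ps: "prob_space M" and chim: "\<And>p. p \<ge> 0 \<Longrightarrow> chi p \<in> borel_measurable M"
    and chi0: "\<And>\<omega>. \<omega> \<in> space M \<Longrightarrow> chi 0 \<omega> = x"
    and chic: "\<And>\<omega>. \<omega> \<in> space M \<Longrightarrow> continuous_on {0..} (\<lambda>u. chi u \<omega>)"
    and dist: "\<And>p q. 0 \<le> p \<Longrightarrow> p < q \<Longrightarrow> distributed M lborel (\<lambda>\<omega>. chi q \<omega> - chi p \<omega>)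
          (\<lambda>y. ennreal (normal_density (a * (q - p)) (\<sigma> * sqrt (q - p)) y))"
    using BM unfolding brownian_motion_drift_def by auto
  interpret prob_space M by (rule ps)
  define Bm where "Bm u \<omega> = chi u \<omega> - x - a * u" for u \<omega>
  define pt where "pt m j = t * real j / 2^m" for m :: nat and j :: nat
  define D where "D m j \<omega> = Bm (pt m (Suc j)) \<omega> - Bm (pt m j) \<omega>" for m j \<omega>
  define lam where "lam m = \<sigma> * sqrt t * (4/5)^m" for m :: nat
  define P where "P m \<omega> = lam m + (\<Sum>j<2^m. (D m j \<omega>)^4) / (lam m)^3" for m \<omega>
  define G where "G \<omega> = (\<Sum>m. ennreal (P m \<omega>))" for \<omega>
  have lam: "lam m > 0" for m unfolding lam_def using sig t by simp
  have pt0: "pt m j \<ge> 0" for m j unfolding pt_def using t by simp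
  have ptd: "pt m (Suc j) - pt m j = t / 2^m" for m j unfolding pt_def by (simp add: field_simps)
  have Dm: "(\<lambda>\<omega>. D m j \<omega>) \<in> borel_measurable M" for m j
  proof -
    have "(\<lambda>\<omega>. chi (pt m (Suc j)) \<omega> - chi (pt m j) \<omega> - a * (t / 2^m)) \<in> borel_measurable M"
      using chim[OF pt0] by measurable
    moreover have "D m j = (\<lambda>\<omega>. chi (pt m (Suc j)) \<omega> - chi (pt m j) \<omega> - a * (t / 2^m))"
      unfolding D_def Bm_def using ptd[of m j] by (auto simp: algebra_simps)
    ultimately show ?thesis by simp
  qed
  have Pm: "(\<lambda>\<omega>. P m \<omega>) \<in> borel_measurable M" for m
    unfolding P_def using Dm by measurable
  have Pnn: "P m \<omega> \<ge> 0" for m \<omega>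
    unfolding P_def using lam[of m] by (auto intro!: add_nonneg_nonneg sum_nonneg divide_nonneg_pos)
  have D4: "integrable M (\<lambda>\<omega>. (D m j \<omega>)^4) \<and> (\<integral>\<omega>. (D m j \<omega>)^4 \<partial>M) = 3 * (\<sigma> * sqrt (t / 2^m))^4" for m j
  proof -
    have "t / 2^m > 0" using t by simp
    then have lt: "pt m j < pt m (Suc j)" using ptd[of m j] by linarith
    have dd: "distributed M lborel (\<lambda>\<omega>. chi (pt m (Suc j)) \<omega> - chi (pt m j) \<omega>)
          (\<lambda>y. ennreal (normal_density (a * (t / 2^m)) (\<sigma> * sqrt (t / 2^m)) y))"
      using dist[OF pt0 lt] ptd[of m j] by simp
    have sp: "\<sigma> * sqrt (t / 2^m) > 0" using sig t by simp
    have eqD: "(\<lambda>\<omega>. (D m j \<omega>)^4) = (\<lambda>\<omega>. ((chi (pt m (Suc j)) \<omega> - chi (pt m j) \<omega>) - a * (t / 2^m))^4)"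
      unfolding D_def Bm_def using ptd[of m j] by (auto simp: algebra_simps)
    show ?thesis unfolding eqD using normal4[OF dd sp] by simp
  qed
  have EP: "(\<integral>\<omega>. P m \<omega> \<partial>M) = \<sigma> * sqrt t * ((4/5)^m + 3 * (125/128)^m)" for m
  proof -
    have "(\<integral>\<omega>. P m \<omega> \<partial>M) = lam m + (\<Sum>j<2^m. (\<integral>\<omega>. (D m j \<omega>)^4 \<partial>M)) / (lam m)^3"
      unfolding P_def using D4 by (simp add: integral_sum prob_space)
    also have "\<dots> = lam m + 2^m * (3 * (\<sigma> * sqrt (t / 2^m))^4) / (\<sigma> * sqrt t * (4/5)^m)^3"
      using D4 by (simp add: lam_def)
    also have "\<dots> = \<sigma> * sqrt t * ((4/5)^m + 3 * (125/128)^m)"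
      using sum_identity[OF sig t, of m] by (simp add: lam_def algebra_simps)
    finally show ?thesis .
  qed
  have Pint: "integrable M (P m)" for m
    unfolding P_def using D4 by (auto intro!: integrable_sum)
  have NP: "(\<integral>\<^sup>+\<omega>. ennreal (P m \<omega>) \<partial>M) = ennreal (\<sigma> * sqrt t * ((4/5)^m + 3 * (125/128)^m))" for m
    using nn_integral_eq_integral[OF Pint[of m]] Pnn EP by simp
  have s1: "(\<lambda>m. (4/5::real)^m) sums 5"
    using geometric_sums[of "4/5::real"] by simp
  have s2: "(\<lambda>m. (125/128::real)^m) sums (128/3)"
    using geometric_sums[of "125/128::real"] by simp
  have s3: "(\<lambda>m. \<sigma> * sqrt t * ((4/5)^m + 3 * (125/128)^m)) sums (133 * \<sigma> * sqrt t)"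
  proof -
    have "(\<lambda>m. (4/5::real)^m + 3 * (125/128)^m) sums (5 + 3 * (128/3))"
      by (intro sums_add s1 sums_mult s2)
    from sums_mult[OF this, of "\<sigma> * sqrt t"] have "(\<lambda>m. \<sigma> * sqrt t * ((4/5::real)^m + 3 * (125/128)^m)) sums (\<sigma> * sqrt t * 133)" by simp
    moreover have "\<sigma> * sqrt t * 133 = 133 * \<sigma> * sqrt t" by simp
    ultimately show ?thesis by simp
  qed
  have NG: "(\<integral>\<^sup>+\<omega>. G \<omega> \<partial>M) = ennreal (133 * \<sigma> * sqrt t)"
  proof -
    have "(\<integral>\<^sup>+\<omega>. G \<omega> \<partial>M) = (\<Sum>m. (\<integral>\<^sup>+\<omega>. ennreal (P m \<omega>) \<partial>M))"
      unfolding G_def by (rule nn_integral_suminf) (rule measurable_compose[OF Pm measurable_ennreal])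
    also have "\<dots> = (\<Sum>m. ennreal (\<sigma> * sqrt t * ((4/5)^m + 3 * (125/128)^m)))"
      by (simp add: NP)
    also have "\<dots> = ennreal (133 * \<sigma> * sqrt t)"
    proof -
      have nn: "0 \<le> \<sigma> * sqrt t * ((4/5::real)^m + 3 * (125/128)^m)" for m
        using sig t by (intro mult_nonneg_nonneg add_nonneg_nonneg) auto
      have "(\<Sum>m. ennreal (\<sigma> * sqrt t * ((4/5)^m + 3 * (125/128)^m)))
          = ennreal (\<Sum>m. \<sigma> * sqrt t * ((4/5)^m + 3 * (125/128)^m))"
        by (rule suminf_ennreal2[OF nn sums_summable[OF s3]])
      also have "(\<Sum>m. \<sigma> * sqrt t * ((4/5::real)^m + 3 * (125/128)^m)) = 133 * \<sigma> * sqrt t"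
        by (rule sums_unique[OF s3, symmetric])
      finally show ?thesis .
    qed
    finally show ?thesis .
  qed
  have pw: "ennreal (Z \<omega>) \<le> ennreal K + 2 * G \<omega>" if \<omega>: "\<omega> \<in> space M" for \<omega>
  proof (cases "G \<omega> = \<top>")
    case True then show ?thesis by simp
  next
    case False
    define g where "g = enn2real (G \<omega>)"
    have Gg: "G \<omega> = ennreal g" unfolding g_def using False by (simp add: ennreal_enn2real_if)
    have g0: "g \<ge> 0" unfolding g_def by simp
    have incb: "\<bar>Bm (t * real (Suc j) / 2^m) \<omega> - Bm (t * real j / 2^m) \<omega>\<bar> \<le> P m \<omega>" if "j < 2^m" for m j
    proof -
      have "\<bar>D m j \<omega>\<bar> \<le> P m \<omega>" unfolding P_def
        by (rule quart_bound[OF lam]) (use that in auto)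
      then show ?thesis unfolding D_def pt_def .
    qed
    have B0: "Bm 0 \<omega> = 0" unfolding Bm_def using chi0[OF \<omega>] by simp
    have dy: "\<bar>Bm (t * real k / 2^n) \<omega>\<bar> \<le> g" if "k \<le> 2^n" for n k
    proof -
      have "\<bar>Bm (t * real k / 2^n) \<omega>\<bar> \<le> (\<Sum>m\<le>n. P m \<omega>)"
        by (rule chain[where B="\<lambda>u. Bm u \<omega>", OF B0 incb that])
      moreover have "ennreal (\<Sum>m\<le>n. P m \<omega>) \<le> G \<omega>"
      proof -
        have "ennreal (\<Sum>m\<le>n. P m \<omega>) = (\<Sum>m\<le>n. ennreal (P m \<omega>))"
          using Pnn by (simp add: sum_ennreal)
        also have "\<dots> = (\<Sum>m<Suc n. ennreal (P m \<omega>))" by (simp add: lessThan_Suc_atMost)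
        also have "\<dots> \<le> G \<omega>" unfolding G_def by (rule sum_le_suminf) auto
        finally show ?thesis .
      qed
      then have "(\<Sum>m\<le>n. P m \<omega>) \<le> g" using Gg g0 by simp
      ultimately show ?thesis by linarith
    qed
    have cB: "continuous_on {0..t} (\<lambda>u. Bm u \<omega>)"
    proof -
      have "continuous_on {0..t} (\<lambda>u. chi u \<omega>)"
        using chic[OF \<omega>] by (rule continuous_on_subset) auto
      then show ?thesis unfolding Bm_def by (intro continuous_intros)
    qed
    have allr: "\<bar>Bm r \<omega>\<bar> \<le> g" if "r \<in> {0..t}" for r
      by (rule dense_bound[where B="\<lambda>u. Bm u \<omega>", OF t cB dy that])
    obtain s where s: "s \<in> {0..t}" "Z \<omega> \<le> K + (chi t \<omega> - a * t) - (chi s \<omega> - a * s)"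
      using Zb[OF \<omega>] by blast
    have "Z \<omega> \<le> K + Bm t \<omega> - Bm s \<omega>" using s(2) unfolding Bm_def by simp
    also have "\<dots> \<le> K + 2 * g" using allr[OF s(1)] allr[of t] t by auto
    finally have "Z \<omega> \<le> K + 2 * g" .
    then have "ennreal (Z \<omega>) \<le> ennreal (K + 2 * g)" by (rule ennreal_leI)
    also have "\<dots> = ennreal K + 2 * G \<omega>" using K g0 Gg by (simp add: ennreal_plus ennreal_mult)
    finally show ?thesis .
  qed
  have Gm: "G \<in> borel_measurable M" unfolding G_def using Pm by measurable
  have NZ: "(\<integral>\<^sup>+\<omega>. ennreal (Z \<omega>) \<partial>M) \<le> ennreal (K + 266 * \<sigma> * sqrt t)"
  proof -
    have "(\<integral>\<^sup>+\<omega>. ennreal (Z \<omega>) \<partial>M) \<le> (\<integral>\<^sup>+\<omega>. ennreal K + 2 * G \<omega> \<partial>M)"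
      by (rule nn_integral_mono) (use pw in auto)
    also have "\<dots> = ennreal K + 2 * (\<integral>\<^sup>+\<omega>. G \<omega> \<partial>M)"
      using Gm by (simp add: nn_integral_add nn_integral_cmult emeasure_space_1)
    also have "\<dots> = ennreal (K + 266 * \<sigma> * sqrt t)"
    proof -
      have h0: "0 \<le> 133 * \<sigma> * sqrt t" using sig t by simp
      have "K + 266 * \<sigma> * sqrt t = K + 2 * (133 * \<sigma> * sqrt t)" by simp
      then have "ennreal (K + 266 * \<sigma> * sqrt t) = ennreal (K + 2 * (133 * \<sigma> * sqrt t))" by (rule arg_cong)
      also have "\<dots> = ennreal K + ennreal (2 * (133 * \<sigma> * sqrt t))"
        using K h0 by (intro ennreal_plus) auto
      also have "ennreal (2 * (133 * \<sigma> * sqrt t)) = ennreal 2 * ennreal (133 * \<sigma> * sqrt t)"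
        using h0 by (intro ennreal_mult) auto
      finally have e: "ennreal (K + 266 * \<sigma> * sqrt t) = ennreal K + 2 * ennreal (133 * \<sigma> * sqrt t)" by simp
      show ?thesis by (simp only: NG e)
    qed
    finally show ?thesis .
  qed
  show iZ: "integrable M Z"
  proof (rule integrableI_bounded[OF Zm])
    have "(\<integral>\<^sup>+\<omega>. ennreal (norm (Z \<omega>)) \<partial>M) = (\<integral>\<^sup>+\<omega>. ennreal (Z \<omega>) \<partial>M)"
      by (rule nn_integral_cong) (use Znn in auto)
    then show "(\<integral>\<^sup>+\<omega>. ennreal (norm (Z \<omega>)) \<partial>M) < \<infinity>" using NZ
      by (simp add: le_less_trans)
  qed
  have "ennreal (\<integral>\<omega>. Z \<omega> \<partial>M) = (\<integral>\<^sup>+\<omega>. ennreal (Z \<omega>) \<partial>M)"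
    by (rule nn_integral_eq_integral[OF iZ, symmetric]) (use Znn in auto)
  then have "ennreal (\<integral>\<omega>. Z \<omega> \<partial>M) \<le> ennreal (K + 266 * \<sigma> * sqrt t)" using NZ by simp
  then show "(\<integral>\<omega>. Z \<omega> \<partial>M) \<le> K + 266 * \<sigma> * sqrt t"
    using K sig t by (subst (asm) ennreal_le_iff) auto
qed



lemma pathwise:
  fixes w l ch th :: "real \<Rightarrow> real"
  assumes cw: "continuous_on {0..} w" and cth: "continuous_on {0..} th"
    and eq: "\<forall>u\<ge>0. w u = ch u - \<eta> * integral {0..u} w - integral {0..u} (\<lambda>s. th (w s)) + l u"
    and pos: "\<forall>u\<ge>0. w u \<ge> 0"
    and lconst: "\<forall>s t. 0 \<le> s \<and> s < t \<and> (\<forall>u\<in>{s..t}. w u > 0) \<longrightarrow> l t = l s"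
    and thlow: "\<And>y. y \<ge> 0 \<Longrightarrow> th y \<ge> - c"
    and w0: "w 0 \<le> K" and K: "K > 0" and eK: "\<eta> * K \<ge> c + a" and eta: "\<eta> > 0" and t: "t \<ge> 0"
  shows "\<exists>s\<in>{0..t}. w t \<le> K + (ch t - a * t) - (ch s - a * s)"
proof -
  define S where "S = {0..t} \<inter> w -` {..K}"
  have cw': "continuous_on {0..t} w" using cw by (rule continuous_on_subset) auto
  have clS: "closed S" unfolding S_def
    by (rule continuous_closed_preimage[OF cw']) auto
  have S0: "0 \<in> S" unfolding S_def using w0 t by auto
  have bS: "bdd_above S" unfolding S_def by (rule bdd_aboveI[of _ t]) auto
  define s where "s = Sup S"
  have sS: "s \<in> S" unfolding s_def using closed_contains_Sup[OF _ bS clS] S0 by auto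
  then have s0: "0 \<le> s" "s \<le> t" "w s \<le> K" unfolding S_def by auto
  have gt: "w u > K" if "s < u" "u \<le> t" for u
  proof (rule ccontr)
    assume "\<not> w u > K"
    then have "u \<in> S" unfolding S_def using that s0 by auto
    then have "u \<le> s" unfolding s_def using bS by (rule cSup_upper)
    then show False using that by simp
  qed
  show ?thesis
  proof (cases "s = t")
    case True
    then show ?thesis using s0 by (intro bexI[of _ t]) auto
  next
    case False
    then have st: "s < t" using s0 by simp
    have wsK: "w s \<ge> K"
    proof -
      have "(w \<longlongrightarrow> w s) (at s within {0..})"
        using cw s0 by (simp add: continuous_on_def)
      then have lim: "(w \<longlongrightarrow> w s) (at_right s)"
        by (rule tendsto_within_subset) (use s0 in auto)
      have "\<forall>\<^sub>F u in at_right s. K \<le> w u"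
        unfolding eventually_at_right[OF st]
        using st gt by (intro exI[of _ t]) (auto intro: less_imp_le)
      from tendsto_lowerbound[OF lim this] show ?thesis by simp
    qed
    have wpos: "\<forall>u\<in>{s..t}. w u > 0"
    proof
      fix u assume "u \<in> {s..t}"
      then show "w u > 0" using gt[of u] wsK K by (cases "u = s") auto
    qed
    have lts: "l t = l s" by (rule lconst[rule_format]) (use st s0 wpos in auto)
    define f where "f u = \<eta> * w u + th (w u)" for u
    have cthw: "continuous_on {0..t} (\<lambda>u. th (w u))"
    proof -
      have "w ` {0..t} \<subseteq> {0..}"
      proof (rule image_subsetI)
        fix u :: real assume "u \<in> {0..t}"
        then have "w u \<ge> 0" using pos by simp
        then show "w u \<in> {0..}" by simp
      qed
      from continuous_on_compose2[OF cth cw' this] show ?thesis .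
    qed
    have iw: "w integrable_on {0..t}" by (rule integrable_continuous_real[OF cw'])
    have ith: "(\<lambda>u. th (w u)) integrable_on {0..t}" by (rule integrable_continuous_real[OF cthw])
    have c1: "integral {0..t} w = integral {0..s} w + integral {s..t} w"
      using Henstock_Kurzweil_Integration.integral_combine[OF s0(1) s0(2) iw] by simp
    have c2: "integral {0..t} (\<lambda>u. th (w u)) = integral {0..s} (\<lambda>u. th (w u)) + integral {s..t} (\<lambda>u. th (w u))"
      using Henstock_Kurzweil_Integration.integral_combine[OF s0(1) s0(2) ith] by simp
    have iw': "w integrable_on {s..t}" using iw by (rule integrable_subinterval_real) (use s0 in auto)
    have ith': "(\<lambda>u. th (w u)) integrable_on {s..t}" using ith by (rule integrable_subinterval_real) (use s0 in auto)
    have "integral {s..t} (\<lambda>u. \<eta> * K - c) \<le> integral {s..t} (\<lambda>u. \<eta> * w u + th (w u))"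
    proof (rule integral_le)
      show "(\<lambda>u. \<eta> * w u + th (w u)) integrable_on {s..t}"
        using integrable_add[OF integrable_cmul[OF iw', of \<eta>] ith'] by simp
      fix u assume "u \<in> {s..t}"
      then have "w u \<ge> K" using gt[of u] wsK K by (cases "u = s") auto
      then have "w u \<ge> 0" using K by simp
      then show "\<eta> * K - c \<le> \<eta> * w u + th (w u)"
      proof -
        have "\<eta> * K \<le> \<eta> * w u" using \<open>w u \<ge> K\<close> eta by (intro mult_left_mono) auto
        then show ?thesis using thlow[of "w u"] \<open>w u \<ge> 0\<close> by linarith
      qed
    qed (rule integrable_const_ivl)
    also have "\<dots> = \<eta> * integral {s..t} w + integral {s..t} (\<lambda>u. th (w u))"
      using integral_add[OF integrable_cmul[OF iw', of \<eta>] ith'] by simp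
    finally have ineq: "(\<eta> * K - c) * (t - s) \<le> \<eta> * integral {s..t} w + integral {s..t} (\<lambda>u. th (w u))"
      using st by (simp add: mult.commute)
    have "w t - w s = ch t - ch s - (\<eta> * integral {s..t} w + integral {s..t} (\<lambda>u. th (w u)))"
      using eq[rule_format, of t] eq[rule_format, of s] s0 t lts c1 c2 by (simp add: algebra_simps)
    then have "w t \<le> K + ch t - ch s - (\<eta> * K - c) * (t - s)" using ineq s0 by linarith
    moreover have "(\<eta> * K - c) * (t - s) \<ge> a * (t - s)" using eK st by (intro mult_right_mono) auto
    ultimately show ?thesis using s0 by (intro bexI[of _ s]) (auto simp: algebra_simps)
  qed
qed


theorem proposition3:
  fixes M :: "'w measure" and chi W L :: "real \<Rightarrow> 'w \<Rightarrow> real"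
    and \<sigma> \<eta> \<alpha> h r a x \<beta> :: real and v v' \<theta> :: "real \<Rightarrow> real"
  assumes "\<sigma> > 0" "\<eta> > 0" "\<alpha> > 0" "h > 0" "r \<ge> 0" "x \<ge> 0"
    and "brownian_motion_drift M chi x a \<sigma>"
    and "\<beta> > 0"
    and "\<And>y. y \<ge> 0 \<Longrightarrow> (v has_real_derivative v' y) (at y within {0..})"
    and "continuous_on {0..} v'"
    and "\<And>y. y \<ge> 0 \<Longrightarrow>
           \<beta> = - (\<alpha> / 4) * (v y)\<^sup>2 + (1/2) * \<sigma>\<^sup>2 * v' y - \<eta> * y * v y + a * v y + h * y"
    and "v 0 = - r"
    and "mono_on {0..} v"
    and "(v \<longlongrightarrow> h / \<eta>) at_top"
    and "\<And>w. \<theta> w = (\<alpha> / 2) * v w"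
    and "workload_process M chi \<eta> \<theta> W L"
  shows "admissible_workload M W"
proof -
  note BM = assms(7)
  have ps: "prob_space M" and chi0: "\<And>\<omega>. \<omega> \<in> space M \<Longrightarrow> chi 0 \<omega> = x"
    using BM unfolding brownian_motion_drift_def by auto
  interpret prob_space M by (rule ps)
  have Wm: "\<And>t. t \<ge> 0 \<Longrightarrow> W t \<in> borel_measurable M"
    and WP: "\<And>\<omega>. \<omega> \<in> space M \<Longrightarrow>
        continuous_on {0..} (\<lambda>t. W t \<omega>) \<and>
        continuous_on {0..} (\<lambda>t. L t \<omega>) \<and>
        (\<forall>t\<ge>0. W t \<omega> = chi t \<omega> - \<eta> * integral {0..t} (\<lambda>s. W s \<omega>)
                      - integral {0..t} (\<lambda>s. \<theta> (W s \<omega>)) + L t \<omega>) \<and>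
        (\<forall>t\<ge>0. W t \<omega> \<ge> 0) \<and>
        L 0 \<omega> = 0 \<and>
        mono_on {0..} (\<lambda>t. L t \<omega>) \<and>
        (\<forall>s t. 0 \<le> s \<and> s < t \<and> (\<forall>u\<in>{s..t}. W u \<omega> > 0) \<longrightarrow> L t \<omega> = L s \<omega>)"
    using assms(16) unfolding workload_process_def by auto
  have Wnn: "W t \<omega> \<ge> 0" if "\<omega> \<in> space M" "t \<ge> 0" for \<omega> t
  proof -
    have "\<forall>t\<ge>0. W t \<omega> \<ge> 0" using WP[OF that(1)] by blast
    then show ?thesis using that(2) by blast
  qed
  define c where "c = \<alpha> * r / 2"
  have vcont: "continuous_on {0..} v"
    unfolding continuous_on_eq_continuous_within
    using assms(9) by (auto intro: DERIV_continuous)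
  have thf: "\<theta> = (\<lambda>w. (\<alpha> / 2) * v w)" using assms(15) by auto
  have thcont: "continuous_on {0..} \<theta>" unfolding thf by (intro continuous_intros vcont)
  have thlow: "\<theta> y \<ge> - c" if "y \<ge> 0" for y
  proof -
    have "v 0 \<le> v y" using assms(13) that by (auto intro: mono_onD)
    then have "(\<alpha> / 2) * (- r) \<le> (\<alpha> / 2) * v y" using assms(3,12) \<open>v 0 = - r\<close>
      by (intro mult_left_mono) auto
    then show ?thesis unfolding c_def thf by simp
  qed
  define K where "K = max x ((c + \<bar>a\<bar>) / \<eta>) + 1"
  have K0: "K > 0" unfolding K_def using assms(6) by auto
  have eK: "\<eta> * K \<ge> c + a"
  proof -
    have "(c + \<bar>a\<bar>) / \<eta> \<le> K" unfolding K_def by simp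
    then have "\<eta> * ((c + \<bar>a\<bar>) / \<eta>) \<le> \<eta> * K" using assms(2) by (intro mult_left_mono) auto
    then show ?thesis using assms(2) by simp
  qed
  have W0: "W 0 \<omega> = x" if "\<omega> \<in> space M" for \<omega>
    using WP[OF that] chi0[OF that] by simp
  have Wb: "\<exists>s\<in>{0..t}. W t \<omega> \<le> K + (chi t \<omega> - a * t) - (chi s \<omega> - a * s)"
    if \<omega>: "\<omega> \<in> space M" and t: "t \<ge> 0" for \<omega> t
  proof (rule pathwise[where w="\<lambda>u. W u \<omega>" and l="\<lambda>u. L u \<omega>" and ch="\<lambda>u. chi u \<omega>" and th=\<theta>])
    show "continuous_on {0..} (\<lambda>u. W u \<omega>)" using WP[OF \<omega>] by blast
    show "continuous_on {0..} \<theta>" by (rule thcont)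
    show "\<forall>u\<ge>0. W u \<omega> = chi u \<omega> - \<eta> * integral {0..u} (\<lambda>u. W u \<omega>) - integral {0..u} (\<lambda>s. \<theta> (W s \<omega>)) + L u \<omega>"
      using WP[OF \<omega>] by blast
    show "\<forall>u\<ge>0. W u \<omega> \<ge> 0" using WP[OF \<omega>] by blast
    show "\<forall>s t. 0 \<le> s \<and> s < t \<and> (\<forall>u\<in>{s..t}. W u \<omega> > 0) \<longrightarrow> L t \<omega> = L s \<omega>"
      using WP[OF \<omega>] by blast
    show "\<And>y. y \<ge> 0 \<Longrightarrow> \<theta> y \<ge> - c" by (rule thlow)
    show "W 0 \<omega> \<le> K" using W0[OF \<omega>] K_def by simp
  qed (use K0 eK assms(2) t in auto)
  have EB: "integrable M (W t) \<and> (\<integral>\<omega>. W t \<omega> \<partial>M) \<le> K + 266 * \<sigma> * sqrt t" if t: "t > 0" for t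
  proof -
    have nn: "\<And>\<omega>. \<omega> \<in> space M \<Longrightarrow> W t \<omega> \<ge> 0" using Wnn t by auto
    have bb: "\<And>\<omega>. \<omega> \<in> space M \<Longrightarrow> \<exists>s\<in>{0..t}. W t \<omega> \<le> K + (chi t \<omega> - a * t) - (chi s \<omega> - a * s)"
      using Wb t by auto
    have Wmt: "W t \<in> borel_measurable M" using Wm t by auto
    from expect_bound[OF BM assms(1) t Wmt nn bb] K0 show ?thesis by auto
  qed
  have int: "integrable M (W t)" if "t \<ge> 0" for t
  proof (cases "t = 0")
    case True
    have "integrable M (\<lambda>\<omega>. x)" by simp
    moreover have "integrable M (\<lambda>\<omega>. W 0 \<omega>) \<longleftrightarrow> integrable M (\<lambda>\<omega>. x)"
      by (rule Bochner_Integration.integrable_cong) (auto simp: W0)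
    ultimately show ?thesis unfolding True by simp
  next
    case False then show ?thesis using EB that by simp
  qed
  have lim: "((\<lambda>t. (\<integral>\<omega>. W t \<omega> \<partial>M) / t) \<longlongrightarrow> 0) at_top"
  proof (rule tendsto_sandwich[where f="\<lambda>_. 0" and h="\<lambda>t. (K + 266 * \<sigma> * sqrt t) / t"])
    show "\<forall>\<^sub>F t in at_top. 0 \<le> (\<integral>\<omega>. W t \<omega> \<partial>M) / t"
      using eventually_ge_at_top[of "1::real"]
    proof eventually_elim
      case (elim t)
      have "0 \<le> (\<integral>\<omega>. W t \<omega> \<partial>M)" using Wnn elim by (intro Bochner_Integration.integral_nonneg) auto
      then show ?case using elim by simp
    qed
    show "\<forall>\<^sub>F t in at_top. (\<integral>\<omega>. W t \<omega> \<partial>M) / t \<le> (K + 266 * \<sigma> * sqrt t) / t"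
      using eventually_ge_at_top[of "1::real"]
    proof eventually_elim
      case (elim t)
      then show ?case using EB[of t] by (intro divide_right_mono) auto
    qed
    show "((\<lambda>_. 0) \<longlongrightarrow> (0::real)) at_top" by simp
    show "((\<lambda>t. (K + 266 * \<sigma> * sqrt t) / t) \<longlongrightarrow> 0) at_top" by real_asymp
  qed
  show ?thesis unfolding admissible_workload_def using int lim by auto
qed

end
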